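(* Let $c=\cos\gamma$, $s=\sin\gamma$ with $\gamma\in(0,2\pi)$, $\gamma\ne\pi/2,\pi,3\pi/2$. Suppose the initial coin state $\nu_0|0\rangle_C+\nu_1|1\rangle_C$ of the generalized alternate quantum walk satisfies \begin{equation*} |\nu_0|^2=|\nu_1|^2,\qquad \nu_0\nu_1^*+\nu_0^*\nu_1=0, \end{equation*} and the initial coin state $q_0|0\rangle_{C'}+q_1|1\rangle_{C'}+q_2|2\rangle_{C'}+q_3|3\rangle_{C'}$ of the generalized Grover walk satisfies \begin{equation*} q_0=q_3=(-1)^\xi\frac{|cs|}{\sqrt{2}\,s},\qquad q_1=q_2=-(-1)^\xi\frac{s}{\sqrt{2}}, \end{equation*} with $\xi\in\{0,1\}$, and the walker starts at the origin $(0,0)$ in both walks. Then the generalized alternate quantum walk and the generalized Grover walk have the same spatial probability distribution (probability of the walker being at $(x,y)$, obtained by tracing out the coin) at every time $t$.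
   Context: Walker space is spanned by $\{|x,y\rangle\}$, $x,y\in\mathbb{Z}$. Generalized Grover walk: four-dimensional coin with basis $|0\rangle_{C'},|1\rangle_{C'},|2\rangle_{C'},|3\rangle_{C'}$ corresponding to moves left-down, left-up, right-down, right-up, i.e. $(x,y)\to(x-1,y-1),(x-1,y+1),(x+1,y-1),(x+1,y+1)$; one time step consists of applying the coin operation \begin{equation*} \hat{A}=\begin{pmatrix} -c^2&|cs|&|cs|&s^2\\ |cs|&-s^2&c^2&|cs|\\ |cs|&c^2&-s^2&|cs|\\ s^2&|cs|&|cs|&-c^2 \end{pmatrix} \end{equation*} followed by the conditional move. Generalized alternate quantum walk: two-dimensional coin with basis $|0\rangle_C,|1\rangle_C$, coin operation $\hat{U}=\begin{pmatrix}c&s\\ s&-c\end{pmatrix}$, and conditional shifts $\hat{S}_x=\sum_{i,j}|i-1,j,0\rangle\langle i,j,0|+\sum_{i,j}|i+1,j,1\rangle\langle i,j,1|$ and $\hat{S}_y=\sum_{i,j}|i,j-1,0\rangle\langle i,j,0|+\sum_{i,j}|i,j+1,1\rangle\langle i,j,1|$; one time step consists of $\hat{U}$, then $\hat{S}_x$, then $\hat{U}$, then $\hat{S}_y$. For $\gamma=\pi/4$ these reduce (up to conventions) to the Hadamard coin and the standard Grover coin. *)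

theory Defs
  imports "HOL-Analysis.Analysis"
begin

text \<open>Wave functions: position (x,y) in Z^2 and coin index (nat; only indices
  below the coin dimension are used) to complex amplitudes.\<close>
type_synonym wavefn = "int \<Rightarrow> int \<Rightarrow> nat \<Rightarrow> complex"

definition grover_coin :: "real \<Rightarrow> nat \<Rightarrow> nat \<Rightarrow> real" where
  "grover_coin \<gamma> i j =
    (let c = cos \<gamma>; s = sin \<gamma>; a = \<bar>c * s\<bar> in
     [[-(c^2), a, a, s^2],
      [a, -(s^2), c^2, a],
      [a, c^2, -(s^2), a],
      [s^2, a, a, -(c^2)]] ! i ! j)"

definition dx4 :: "nat \<Rightarrow> int" where "dx4 i = (if i < 2 then -1 else 1)"
definition dy4 :: "nat \<Rightarrow> int" where "dy4 i = (if even i then -1 else 1)"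

definition grover_step :: "real \<Rightarrow> wavefn \<Rightarrow> wavefn" where
  "grover_step \<gamma> \<psi> x y i =
     (if i < 4 then
        (\<Sum>k<4. complex_of_real (grover_coin \<gamma> i k) * \<psi> (x - dx4 i) (y - dy4 i) k)
      else 0)"

definition alt_coin :: "real \<Rightarrow> nat \<Rightarrow> nat \<Rightarrow> real" where
  "alt_coin \<gamma> i j = [[cos \<gamma>, sin \<gamma>], [sin \<gamma>, - cos \<gamma>]] ! i ! j"

definition apply_alt_coin :: "real \<Rightarrow> wavefn \<Rightarrow> wavefn" where
  "apply_alt_coin \<gamma> \<psi> x y i =
     (if i < 2 then (\<Sum>k<2. complex_of_real (alt_coin \<gamma> i k) * \<psi> x y k) else 0)"

text \<open>S_x: coin 0 moves x to x-1, coin 1 moves x to x+1; S_y analogously.\<close>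
definition shift_x :: "wavefn \<Rightarrow> wavefn" where
  "shift_x \<psi> x y i = (if i = 0 then \<psi> (x + 1) y 0 else if i = 1 then \<psi> (x - 1) y 1 else 0)"

definition shift_y :: "wavefn \<Rightarrow> wavefn" where
  "shift_y \<psi> x y i = (if i = 0 then \<psi> x (y + 1) 0 else if i = 1 then \<psi> x (y - 1) 1 else 0)"

definition alt_step :: "real \<Rightarrow> wavefn \<Rightarrow> wavefn" where
  "alt_step \<gamma> \<psi> = shift_y (apply_alt_coin \<gamma> (shift_x (apply_alt_coin \<gamma> \<psi>)))"

definition grover_walk :: "real \<Rightarrow> wavefn \<Rightarrow> nat \<Rightarrow> wavefn" where
  "grover_walk \<gamma> \<psi>0 t = (grover_step \<gamma> ^^ t) \<psi>0"

definition alt_walk :: "real \<Rightarrow> wavefn \<Rightarrow> nat \<Rightarrow> wavefn" where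
  "alt_walk \<gamma> \<psi>0 t = (alt_step \<gamma> ^^ t) \<psi>0"

definition at_origin :: "(nat \<Rightarrow> complex) \<Rightarrow> wavefn" where
  "at_origin q x y k = (if x = 0 \<and> y = 0 then q k else 0)"

definition prob_at :: "nat \<Rightarrow> wavefn \<Rightarrow> int \<Rightarrow> int \<Rightarrow> real" where
  "prob_at d \<psi> x y = (\<Sum>k<d. (cmod (\<psi> x y k))^2)"

end

theory Submission
  imports Defs
begin

lemma sum2: "(\<Sum>k<(2::nat). f k) = f 0 + f 1"
  by (simp add: numeral_2_eq_2)
lemma sum4: "(\<Sum>k<(4::nat). f k) = f 0 + f 1 + f 2 + f 3"
  by (simp add: numeral_eq_Suc)

lemma T0: "alt_step g X x y 0 =
  of_real (cos g) * (of_real (cos g) * X (x+1) (y+1) 0 + of_real (sin g) * X (x+1) (y+1) 1)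
  + of_real (sin g) * (of_real (sin g) * X (x-1) (y+1) 0 - of_real (cos g) * X (x-1) (y+1) 1)"
  by (simp add: alt_step_def shift_y_def shift_x_def apply_alt_coin_def alt_coin_def sum2)

lemma T1: "alt_step g X x y 1 =
  of_real (sin g) * (of_real (cos g) * X (x+1) (y-1) 0 + of_real (sin g) * X (x+1) (y-1) 1)
  - of_real (cos g) * (of_real (sin g) * X (x-1) (y-1) 0 - of_real (cos g) * X (x-1) (y-1) 1)"
  by (simp add: alt_step_def shift_y_def shift_x_def apply_alt_coin_def alt_coin_def sum2)

lemma T2: "k \<ge> 2 \<Longrightarrow> alt_step g X x y k = 0"
  by (simp add: alt_step_def shift_y_def)

lemma G0: "grover_step g P x y 0 = of_real (-(cos g^2)) * P (x+1) (y+1) 0 + of_real (\<bar>cos g * sin g\<bar>) * P (x+1) (y+1) 1 + of_real (\<bar>cos g * sin g\<bar>) * P (x+1) (y+1) 2 + of_real (sin g^2) * P (x+1) (y+1) 3"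
  by (simp add: grover_step_def grover_coin_def sum4 dx4_def dy4_def Let_def)

lemma G1: "grover_step g P x y 1 = of_real (\<bar>cos g * sin g\<bar>) * P (x+1) (y-1) 0 + of_real (-(sin g^2)) * P (x+1) (y-1) 1 + of_real (cos g^2) * P (x+1) (y-1) 2 + of_real (\<bar>cos g * sin g\<bar>) * P (x+1) (y-1) 3"
  by (simp add: grover_step_def grover_coin_def sum4 dx4_def dy4_def Let_def)

lemma G2: "grover_step g P x y 2 = of_real (\<bar>cos g * sin g\<bar>) * P (x-1) (y+1) 0 + of_real (cos g^2) * P (x-1) (y+1) 1 + of_real (-(sin g^2)) * P (x-1) (y+1) 2 + of_real (\<bar>cos g * sin g\<bar>) * P (x-1) (y+1) 3"
  by (simp add: grover_step_def grover_coin_def sum4 dx4_def dy4_def Let_def)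

lemma G3: "grover_step g P x y 3 = of_real (sin g^2) * P (x-1) (y-1) 0 + of_real (\<bar>cos g * sin g\<bar>) * P (x-1) (y-1) 1 + of_real (\<bar>cos g * sin g\<bar>) * P (x-1) (y-1) 2 + of_real (-(cos g^2)) * P (x-1) (y-1) 3"
  by (simp add: grover_step_def grover_coin_def sum4 dx4_def dy4_def Let_def)


lemmas T1s = T1[unfolded One_nat_def]
lemmas G1s = G1[unfolded One_nat_def]

lemma Gge4: "i \<ge> 4 \<Longrightarrow> grover_step g P x y i = 0"
  by (simp add: grover_step_def)

definition emb :: "nat \<Rightarrow> (int \<Rightarrow> int \<Rightarrow> complex) \<Rightarrow> wavefn" where
  "emb j f x y k = (if k = j then f x y else 0)"

definition tau :: "real \<Rightarrow> (int \<Rightarrow> int \<Rightarrow> complex) \<Rightarrow> int \<Rightarrow> int \<Rightarrow> complex" where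
  "tau g f x y = of_real (cos g ^ 2) * f (x+1) (y+1) + of_real (sin g ^ 2) * f (x-1) (y+1)
     + of_real (sin g ^ 2) * f (x+1) (y-1) + of_real (cos g ^ 2) * f (x-1) (y-1)"

definition uu :: "real \<Rightarrow> (int \<Rightarrow> int \<Rightarrow> complex) \<Rightarrow> (int \<Rightarrow> int \<Rightarrow> complex) \<Rightarrow> nat \<Rightarrow> wavefn" where
  "uu g f h j x y k = emb j f x y k + alt_step g (emb j h) x y k"

lemma cs1: "(of_real (cos g) :: complex)^2 + of_real (sin g)^2 = 1"
  by (metis of_real_add of_real_power of_real_1 sin_cos_squared_add add.commute)

lemma closure0: "alt_step g (uu g f h 0) x y k = uu g (\<lambda>x y. - h x y) (\<lambda>x y. f x y + tau g h x y) 0 x y k"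
proof -
  have e: "(of_real (cos g) :: complex)^2 + of_real (sin g)^2 = 1" by (rule cs1)
  consider "k = 0" | "k = 1" | "k \<ge> 2" by linarith
  then show ?thesis
  proof cases
    case 1 show ?thesis
      apply (simp add: 1 T0 T1 T1s uu_def emb_def tau_def)
      using e by algebra
  next
    case 2 show ?thesis
      by (simp add: 2 T0 T1 T1s uu_def emb_def tau_def algebra_simps power2_eq_square)
  next
    case 3 then show ?thesis by (simp add: T2 uu_def emb_def)
  qed
qed

lemma closure1: "alt_step g (uu g f h 1) x y k = uu g (\<lambda>x y. - h x y) (\<lambda>x y. f x y + tau g h x y) 1 x y k"
proof -
  have e: "(of_real (cos g) :: complex)^2 + of_real (sin g)^2 = 1" by (rule cs1)
  consider "k = 0" | "k = 1" | "k \<ge> 2" by linarith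
  then show ?thesis
  proof cases
    case 1 show ?thesis
      apply (simp add: 1 T0 T1 T1s uu_def emb_def tau_def)
      apply ((simp add: algebra_simps power2_eq_square; fail) | (use e in algebra))
      done
  next
    case 2 show ?thesis
      apply (simp add: 2 T0 T1 T1s uu_def emb_def tau_def)
      apply ((simp add: algebra_simps power2_eq_square; fail) | (use e in algebra))
      done
  next
    case 3 then show ?thesis by (simp add: T2 uu_def emb_def)
  qed
qed

definition Lmap :: "real \<Rightarrow> real \<Rightarrow> wavefn \<Rightarrow> wavefn \<Rightarrow> wavefn" where
  "Lmap g \<sigma> u v x y i =
    (if i = 0 then - (of_real (cos g) * u x y 0 + of_real (sin g) * v x y 0)
     else if i = 1 then of_real \<sigma> * (of_real (cos g) * u x y 1 + of_real (sin g) * v x y 1)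
     else if i = 2 then of_real \<sigma> * (of_real (sin g) * u x y 0 - of_real (cos g) * v x y 0)
     else if i = 3 then of_real (sin g) * u x y 1 - of_real (cos g) * v x y 1
     else 0)"

lemma Pcls:
  assumes ab: "\<bar>cos g * sin g\<bar> = \<sigma> * (cos g * sin g)" and sq: "\<sigma> * \<sigma> = 1"
  shows "grover_step g (Lmap g \<sigma> (uu g f h 0) (uu g f h 1)) x y i
    = - Lmap g \<sigma> (uu g (\<lambda>x y. - h x y) (\<lambda>x y. f x y + tau g h x y) 0)
                 (uu g (\<lambda>x y. - h x y) (\<lambda>x y. f x y + tau g h x y) 1) x y i"
proof -
  have e: "(of_real (cos g) :: complex)^2 + of_real (sin g)^2 = 1" by (rule cs1)
  have sq': "(of_real \<sigma> :: complex) * of_real \<sigma> = 1" using sq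
    by (metis of_real_1 of_real_mult)
  consider "i = 0" | "i = 1" | "i = 2" | "i = 3" | "i \<ge> 4" by linarith
  then show ?thesis
  proof cases
    case 1 show ?thesis
      apply (simp add: 1 G0 ab Lmap_def T0 T1 T1s uu_def emb_def tau_def)
      apply ((simp add: algebra_simps power2_eq_square; fail) | (use e sq' in algebra))
      done
  next
    case 2 show ?thesis
      apply (simp add: 2 G1s ab Lmap_def T0 T1 T1s uu_def emb_def tau_def)
      apply ((simp add: algebra_simps power2_eq_square; fail) | (use e sq' in algebra))
      done
  next
    case 3 show ?thesis
      apply (simp add: 3 G2 ab Lmap_def T0 T1 T1s uu_def emb_def tau_def)
      apply ((simp add: algebra_simps power2_eq_square; fail) | (use e sq' in algebra))
      done
  next
    case 4 show ?thesis
      apply (simp add: 4 G3 ab Lmap_def T0 T1 T1s uu_def emb_def tau_def)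
      apply ((simp add: algebra_simps power2_eq_square; fail) | (use e sq' in algebra))
      done
  next
    case 5 then show ?thesis by (simp add: Gge4 Lmap_def)
  qed
qed

fun fh :: "real \<Rightarrow> nat \<Rightarrow> (int \<Rightarrow> int \<Rightarrow> complex) \<times> (int \<Rightarrow> int \<Rightarrow> complex)" where
  "fh g 0 = ((\<lambda>x y. if x = 0 \<and> y = 0 then 1 else 0), (\<lambda>x y. 0))"
| "fh g (Suc n) = ((\<lambda>x y. - snd (fh g n) x y), (\<lambda>x y. fst (fh g n) x y + tau g (snd (fh g n)) x y))"

definition WW :: "real \<Rightarrow> nat \<Rightarrow> nat \<Rightarrow> wavefn" where
  "WW g n j = uu g (fst (fh g n)) (snd (fh g n)) j"

lemma WW_Suc0: "alt_step g (WW g n 0) = WW g (Suc n) 0"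
  by (intro ext) (simp add: WW_def closure0)
lemma WW_Suc1: "alt_step g (WW g n 1) = WW g (Suc n) 1"
  by (intro ext) (simp add: WW_def closure1[unfolded One_nat_def])

lemma T_zero: "alt_step g (emb j (\<lambda>x y. 0)) x y k = 0"
proof -
  consider "k = 0" | "k = 1" | "k \<ge> 2" by linarith
  then show ?thesis by cases (simp_all add: T0 T1s T2 emb_def)
qed

lemma WW0: "WW g 0 j x y k = emb j (\<lambda>x y. if x = 0 \<and> y = 0 then 1 else 0) x y k"
  by (simp add: WW_def uu_def T_zero)

lemma fh_real: "Im (fst (fh g n) x y) = 0 \<and> Im (snd (fh g n) x y) = 0"
proof (induction n arbitrary: x y)
  case 0 then show ?case by simp
next
  case (Suc n) then show ?case by (simp add: tau_def)
qed

lemma WW_real: "Im (WW g n j x y k) = 0"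
proof -
  consider "k = 0" | "k = 1" | "k \<ge> 2" by linarith
  then show ?thesis by cases (simp_all add: WW_def uu_def emb_def T0 T1s T2 fh_real)
qed

lemma gcong: "(\<And>x y k. k < 4 \<Longrightarrow> P x y k = Q x y k) \<Longrightarrow> grover_step g P x y i = grover_step g Q x y i"
  by (simp add: grover_step_def)

lemma gscal: "grover_step g (\<lambda>x y i. C * P x y i) x y i = C * grover_step g P x y i"
  by (simp add: grover_step_def sum_distrib_left algebra_simps)

lemma alt_rel:
  assumes "k < 2"
  shows "alt_walk g (at_origin (\<lambda>k. if k = 0 then \<nu>0 else \<nu>1)) t x y k
     = \<nu>0 * WW g t 0 x y k + \<nu>1 * WW g t 1 x y k"
  using assms
proof (induction t arbitrary: x y k)
  case 0
  then consider "k = 0" | "k = 1" by linarith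
  then show ?case by cases (simp_all add: alt_walk_def WW0 emb_def at_origin_def)
next
  case (Suc t)
  have e: "alt_walk g \<psi> (Suc t) = alt_step g (alt_walk g \<psi> t)" for \<psi>
    by (simp add: alt_walk_def)
  have w0: "WW g (Suc t) 0 = alt_step g (WW g t 0)" by (rule WW_Suc0[symmetric])
  have w1: "WW g (Suc t) 1 = alt_step g (WW g t 1)" by (rule WW_Suc1[symmetric])
  from Suc.prems consider "k = 0" | "k = 1" by linarith
  then show ?case
    by cases (simp_all add: e w0 w1[unfolded One_nat_def] T0 T1s Suc.IH algebra_simps)
qed

lemma sin_nz: assumes "0 < g" "g < 2 * pi" "g \<noteq> pi" shows "sin g \<noteq> 0"
proof
  assume "sin g = 0"
  then obtain i :: int where i: "g = of_int i * pi" by (auto simp: sin_zero_iff_int2)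
  with assms have "0 < of_int i * pi" "of_int i * pi < 2 * pi" by auto
  then have "0 < i" "i < 2" by (simp_all add: zero_less_mult_iff)
  then have "i = 1" by linarith
  with i assms show False by simp
qed


lemma grov_rel:
  assumes ab: "\<bar>cos g * sin g\<bar> = \<sigma> * (cos g * sin g)" and sq: "\<sigma> * \<sigma> = 1"
    and base: "\<And>x y i. i < 4 \<Longrightarrow> at_origin q x y i = of_real (\<rho> / sqrt 2) * Lmap g \<sigma> (WW g 0 0) (WW g 0 1) x y i"
  shows "i < 4 \<Longrightarrow> grover_walk g (at_origin q) t x y i
     = of_real (\<rho> * (-1)^t / sqrt 2) * Lmap g \<sigma> (WW g t 0) (WW g t 1) x y i"
proof (induction t arbitrary: x y i)
  case 0 then show ?case by (simp add: grover_walk_def base)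
next
  case (Suc t)
  have e: "grover_walk g P (Suc t) = grover_step g (grover_walk g P t)" for P
    by (simp add: grover_walk_def)
  have "grover_walk g (at_origin q) (Suc t) x y i
      = grover_step g (\<lambda>x y i. of_real (\<rho> * (-1)^t / sqrt 2) * Lmap g \<sigma> (WW g t 0) (WW g t 1) x y i) x y i"
    unfolding e by (rule gcong) (rule Suc.IH)
  also have "\<dots> = of_real (\<rho> * (-1)^t / sqrt 2) * grover_step g (Lmap g \<sigma> (WW g t 0) (WW g t 1)) x y i"
    by (rule gscal)
  also have "grover_step g (Lmap g \<sigma> (WW g t 0) (WW g t 1)) x y i = - Lmap g \<sigma> (WW g (Suc t) 0) (WW g (Suc t) 1) x y i"
    unfolding WW_def using Pcls[OF ab sq] by simp
  finally show ?case by simp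
qed

lemma fin1:
  assumes "(cmod \<nu>0)^2 = 1/2" "(cmod \<nu>1)^2 = 1/2" "\<nu>0 * cnj \<nu>1 + cnj \<nu>0 * \<nu>1 = 0"
  shows "(cmod (\<nu>0 * of_real a + \<nu>1 * of_real b))^2 = (a^2 + b^2)/2"
proof -
  have n0: "\<nu>0 * cnj \<nu>0 = 1/2" using assms(1) complex_norm_square[of \<nu>0]
    by (metis of_real_divide of_real_1 of_real_numeral of_real_power)
  have n1: "\<nu>1 * cnj \<nu>1 = 1/2" using assms(2) complex_norm_square[of \<nu>1]
    by (metis of_real_divide of_real_1 of_real_numeral of_real_power)
  let ?z = "\<nu>0 * of_real a + \<nu>1 * of_real b"
  have "complex_of_real ((cmod ?z)^2) = ?z * cnj ?z" by (metis complex_norm_square of_real_power)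
  also have "\<dots> = (\<nu>0 * cnj \<nu>0) * of_real (a^2) + (\<nu>1 * cnj \<nu>1) * of_real (b^2)
      + (\<nu>0 * cnj \<nu>1 + cnj \<nu>0 * \<nu>1) * of_real (a * b)"
    by (simp add: algebra_simps power2_eq_square)
  also have "\<dots> = of_real ((a^2 + b^2)/2)" unfolding n0 n1 assms(3) by simp
  finally show ?thesis using of_real_eq_iff by blast
qed


theorem theorem2:
  fixes \<gamma> :: real and \<nu>0 \<nu>1 :: complex and \<xi> :: nat and q :: "nat \<Rightarrow> complex"
  assumes "0 < \<gamma>" "\<gamma> < 2 * pi"
    and "\<gamma> \<noteq> pi / 2" "\<gamma> \<noteq> pi" "\<gamma> \<noteq> 3 * pi / 2"
    and "(cmod \<nu>0)^2 + (cmod \<nu>1)^2 = 1"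
    and "(cmod \<nu>0)^2 = (cmod \<nu>1)^2"
    and "\<nu>0 * cnj \<nu>1 + cnj \<nu>0 * \<nu>1 = 0"
    and "\<xi> \<in> {0, 1}"
    and "q 0 = complex_of_real ((-1)^\<xi> * \<bar>cos \<gamma> * sin \<gamma>\<bar> / (sqrt 2 * sin \<gamma>))"
    and "q 3 = q 0"
    and "q 1 = complex_of_real (- ((-1)^\<xi> * sin \<gamma> / sqrt 2))"
    and "q 2 = q 1"
  shows "\<forall>t x y.
    prob_at 2 (alt_walk \<gamma> (at_origin (\<lambda>k. if k = 0 then \<nu>0 else \<nu>1)) t) x y
    = prob_at 4 (grover_walk \<gamma> (at_origin q) t) x y"
proof (intro allI)
  fix t x y
  define c where "c = cos \<gamma>"
  define s where "s = sin \<gamma>"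
  define \<sigma> :: real where "\<sigma> = (if cos \<gamma> * sin \<gamma> \<ge> 0 then 1 else -1)"
  have ab: "\<bar>cos \<gamma> * sin \<gamma>\<bar> = \<sigma> * (cos \<gamma> * sin \<gamma>)" by (simp add: \<sigma>_def)
  have sq: "\<sigma> * \<sigma> = 1" by (simp add: \<sigma>_def)
  have snz: "sin \<gamma> \<noteq> 0" using sin_nz assms(1,2,4) by blast
  define \<rho> :: real where "\<rho> = - ((-1)^\<xi>) * \<sigma>"
  have xi2: "((-1::real)^\<xi>) * (-1)^\<xi> = 1" by (metis power_add power_mult_distrib mult_minus_left mult_1_left minus_one_mult_self)
  have rho2: "\<rho> * \<rho> = 1" unfolding \<rho>_def using xi2 sq by (simp add: algebra_simps)
  have q0: "(-1)^\<xi> * \<bar>cos \<gamma> * sin \<gamma>\<bar> / (sqrt 2 * sin \<gamma>) = \<rho> / sqrt 2 * (- cos \<gamma>)"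
    unfolding ab \<rho>_def using snz by (simp add: field_simps)
  have q1: "- ((-1)^\<xi> * sin \<gamma> / sqrt 2) = \<rho> / sqrt 2 * (\<sigma> * sin \<gamma>)"
    unfolding \<rho>_def using sq by (simp add: field_simps)
  have base: "at_origin q x y i = of_real (\<rho> / sqrt 2) * Lmap \<gamma> \<sigma> (WW \<gamma> 0 0) (WW \<gamma> 0 1) x y i"
    if "i < 4" for x y i
  proof -
    from that consider "i = 0" | "i = 1" | "i = 2" | "i = 3" by linarith
    then show ?thesis
    proof cases
      case 1 show ?thesis using assms(10) q0
        by (simp add: 1 at_origin_def Lmap_def WW0 emb_def; (metis of_real_minus of_real_mult)?)
    next
      case 2 show ?thesis using assms(12) q1
        by (simp add: 2 at_origin_def Lmap_def WW0 emb_def; (metis of_real_mult)?)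
    next
      case 3 show ?thesis using assms(12,13) q1
        by (simp add: 3 at_origin_def Lmap_def WW0 emb_def; (metis of_real_mult)?)
    next
      case 4 show ?thesis using assms(10,11) q0
        by (simp add: 4 at_origin_def Lmap_def WW0 emb_def; (metis of_real_minus of_real_mult)?)
    qed
  qed
  have GR: "grover_walk \<gamma> (at_origin q) t x y i
     = of_real (\<rho> * (-1)^t / sqrt 2) * Lmap \<gamma> \<sigma> (WW \<gamma> t 0) (WW \<gamma> t 1) x y i" if "i < 4" for i
    using grov_rel[OF ab sq base that] .
  have nu0: "(cmod \<nu>0)^2 = 1/2" and nu1: "(cmod \<nu>1)^2 = 1/2" using assms(6,7) by auto
  define a0 where "a0 = Re (WW \<gamma> t 0 x y 0)"
  define a1 where "a1 = Re (WW \<gamma> t 0 x y 1)"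
  define b0 where "b0 = Re (WW \<gamma> t 1 x y 0)"
  define b1 where "b1 = Re (WW \<gamma> t 1 x y 1)"
  have re: "Im z = 0 \<Longrightarrow> z = of_real (Re z)" for z by (simp add: complex_eq_iff)
  have ha0: "WW \<gamma> t 0 x y 0 = of_real a0" unfolding a0_def by (rule re[OF WW_real])
  have ha1: "WW \<gamma> t 0 x y 1 = of_real a1" unfolding a1_def by (rule re[OF WW_real])
  have hb0: "WW \<gamma> t 1 x y 0 = of_real b0" unfolding b0_def by (rule re[OF WW_real])
  have hb1: "WW \<gamma> t 1 x y 1 = of_real b1" unfolding b1_def by (rule re[OF WW_real])
  define K where "K = \<rho> * (-1)^t / sqrt 2"
  have K2: "K^2 = 1/2" unfolding K_def power2_eq_square
    using rho2 by (simp add: field_simps)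
  have LHS: "prob_at 2 (alt_walk \<gamma> (at_origin (\<lambda>k. if k = 0 then \<nu>0 else \<nu>1)) t) x y
     = (a0^2 + b0^2)/2 + (a1^2 + b1^2)/2"
    unfolding prob_at_def sum2 using alt_rel[of 0] alt_rel[of 1]
    apply (simp add: ha0 ha1 hb0 hb1 ha1[unfolded One_nat_def] hb0[unfolded One_nat_def] hb1[unfolded One_nat_def])
    using fin1[OF nu0 nu1 assms(8), of a0 b0] fin1[OF nu0 nu1 assms(8), of a1 b1] by linarith
  have cm: "(cmod (of_real K * of_real r))^2 = K^2 * r^2" for r
    by (simp add: norm_mult power_mult_distrib)
  have RHS: "prob_at 4 (grover_walk \<gamma> (at_origin q) t) x y
     = K^2 * ((c*a0 + s*b0)^2 + (\<sigma>*(c*a1 + s*b1))^2 + (\<sigma>*(s*a0 - c*b0))^2 + (s*a1 - c*b1)^2)"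
  proof -
    have "prob_at 4 (grover_walk \<gamma> (at_origin q) t) x y = (\<Sum>i<4. (cmod (grover_walk \<gamma> (at_origin q) t x y i))^2)"
      by (simp add: prob_at_def)
    also have "\<dots> = (cmod (of_real K * of_real (-(c*a0 + s*b0))))^2 + (cmod (of_real K * of_real (\<sigma>*(c*a1 + s*b1))))^2
        + (cmod (of_real K * of_real (\<sigma>*(s*a0 - c*b0))))^2 + (cmod (of_real K * of_real (s*a1 - c*b1)))^2"
      unfolding sum4 using GR[of 0] GR[of 1] GR[of 2] GR[of 3]
      by (simp add: Lmap_def ha0 ha1 hb0 hb1 ha1[unfolded One_nat_def] hb0[unfolded One_nat_def] hb1[unfolded One_nat_def] K_def c_def s_def)
    finally show ?thesis unfolding cm by (simp add: algebra_simps power2_eq_square)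
  qed
  have cs: "c^2 + s^2 = 1" by (simp add: c_def s_def)
  have "K^2 * ((c*a0 + s*b0)^2 + (\<sigma>*(c*a1 + s*b1))^2 + (\<sigma>*(s*a0 - c*b0))^2 + (s*a1 - c*b1)^2)
     = K^2 * ((c^2 + s^2) * (a0^2 + b0^2 + a1^2 + b1^2))"
    using sq by (simp add: power2_eq_square algebra_simps) algebra
  also have "\<dots> = (a0^2 + b0^2)/2 + (a1^2 + b1^2)/2" unfolding K2 cs by (simp add: field_simps)
  finally show "prob_at 2 (alt_walk \<gamma> (at_origin (\<lambda>k. if k = 0 then \<nu>0 else \<nu>1)) t) x y
    = prob_at 4 (grover_walk \<gamma> (at_origin q) t) x y" using LHS RHS by simp
qed

end
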